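(* Let $\alpha$ be a graph function on a strongly connected digraph $G$, with heights $y$ and levels $x$, and let $v$ be a vertex with $y_v>\min_u y_u$. Let $x_U=\max\{x_u: y_u<y_v\}$ and $U=\{u: y_u<y_v,\ x_u=x_U\}$. Then there is a vertex $u'\in U$ and an edge $(u',v')$ of $G$ with $v'\notin U$, $\alpha^R_{u'v'}\ge x_U$, and $y_{v'}\ge y_v$.
   Context: $G$ is a strongly connected directed graph (self-loops allowed); $u\to v$ means $(u,v)$ is an edge. A graph function assigns a real weight $\alpha_{uv}$ to each edge. $\alpha_v^{\text{in}}=\max_{u\to v}\alpha_{uv}$, $\alpha_v^{\text{out}}=\max_{v\to w}\alpha_{vw}$, $\rho^R_v=\max\{0,\alpha_v^{\text{out}}-\alpha_v^{\text{in}}\}$. A raising operation at $v$: if $\rho^R_v>0$ add $\rho^R_v/2$ to each incoming edge weight $\alpha_{uv}$ ($u\ne v$) and subtract it from each outgoing $\alpha_{vw}$ ($w\neq v$); otherwise do nothing. Starting from $\alpha$, for any infinite sequence of raising operations in which every vertex occurs infinitely often, the cumulative amount by which each vertex has been raised converges to a limit vector $r^*$ independent of the sequence, and the graph functions converge to the raising-balanced graph function $\alpha^R_{uv}=\alpha_{uv}+r^*_v-r^*_u$. Heights: $y_v=-r^*_v$. Levels: $x_v=\max_{u\to v}\alpha^R_{uv}$. *)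

theory Defs
  imports Complex_Main
begin

text \<open>A graph function is a map alpha :: 'v \<Rightarrow> 'v \<Rightarrow> real, of which only the values on edges matter.\<close>

definition strongly_connected :: "'v set \<Rightarrow> ('v \<times> 'v) set \<Rightarrow> bool" where
  "strongly_connected V E \<longleftrightarrow> finite V \<and> V \<noteq> {} \<and> E \<subseteq> V \<times> V \<and>
     (\<forall>a\<in>V. \<forall>b\<in>V. (a, b) \<in> E\<^sup>+)"

definition alpha_in :: "('v \<times> 'v) set \<Rightarrow> ('v \<Rightarrow> 'v \<Rightarrow> real) \<Rightarrow> 'v \<Rightarrow> real" where
  "alpha_in E \<alpha> v = Max {\<alpha> u v | u. (u, v) \<in> E}"

definition alpha_out :: "('v \<times> 'v) set \<Rightarrow> ('v \<Rightarrow> 'v \<Rightarrow> real) \<Rightarrow> 'v \<Rightarrow> real" where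
  "alpha_out E \<alpha> v = Max {\<alpha> v w | w. (v, w) \<in> E}"

definition rhoR :: "('v \<times> 'v) set \<Rightarrow> ('v \<Rightarrow> 'v \<Rightarrow> real) \<Rightarrow> 'v \<Rightarrow> real" where
  "rhoR E \<alpha> v = max 0 (alpha_out E \<alpha> v - alpha_in E \<alpha> v)"

definition raise_op :: "('v \<times> 'v) set \<Rightarrow> ('v \<Rightarrow> 'v \<Rightarrow> real) \<Rightarrow> 'v \<Rightarrow> ('v \<Rightarrow> 'v \<Rightarrow> real)" where
  "raise_op E \<alpha> v = (\<lambda>a b. \<alpha> a b
      + (if b = v \<and> a \<noteq> v then rhoR E \<alpha> v / 2 else 0)
      - (if a = v \<and> b \<noteq> v then rhoR E \<alpha> v / 2 else 0))"

text \<open>Running a sequence of raising operations sigma from alpha: the current graph function and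
  the cumulative amount by which each vertex has been raised so far.\<close>
fun raise_iter :: "('v \<times> 'v) set \<Rightarrow> ('v \<Rightarrow> 'v \<Rightarrow> real) \<Rightarrow> (nat \<Rightarrow> 'v) \<Rightarrow> nat
      \<Rightarrow> ('v \<Rightarrow> 'v \<Rightarrow> real) \<times> ('v \<Rightarrow> real)" where
  "raise_iter E \<alpha> \<sigma> 0 = (\<alpha>, (\<lambda>_. 0))"
| "raise_iter E \<alpha> \<sigma> (Suc n) =
     (let (\<beta>, R) = raise_iter E \<alpha> \<sigma> n; v = \<sigma> n
      in (raise_op E \<beta> v, R(v := R v + rhoR E \<beta> v / 2)))"

definition fair_seq :: "'v set \<Rightarrow> (nat \<Rightarrow> 'v) \<Rightarrow> bool" where
  "fair_seq V \<sigma> \<longleftrightarrow> (\<forall>n. \<sigma> n \<in> V) \<and> (\<forall>v\<in>V. \<forall>n. \<exists>m\<ge>n. \<sigma> m = v)"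

definition is_raise_limit :: "'v set \<Rightarrow> ('v \<times> 'v) set \<Rightarrow> ('v \<Rightarrow> 'v \<Rightarrow> real) \<Rightarrow> ('v \<Rightarrow> real) \<Rightarrow> bool" where
  "is_raise_limit V E \<alpha> r \<longleftrightarrow>
     (\<forall>\<sigma>. fair_seq V \<sigma> \<longrightarrow> (\<forall>u\<in>V. (\<lambda>n. snd (raise_iter E \<alpha> \<sigma> n) u) \<longlonglongrightarrow> r u))"

definition balancedR :: "('v \<Rightarrow> 'v \<Rightarrow> real) \<Rightarrow> ('v \<Rightarrow> real) \<Rightarrow> 'v \<Rightarrow> 'v \<Rightarrow> real" where
  "balancedR \<alpha> r = (\<lambda>a b. \<alpha> a b + r b - r a)"

definition heights :: "('v \<Rightarrow> real) \<Rightarrow> 'v \<Rightarrow> real" where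
  "heights r = (\<lambda>u. - r u)"

definition levels :: "('v \<times> 'v) set \<Rightarrow> ('v \<Rightarrow> 'v \<Rightarrow> real) \<Rightarrow> ('v \<Rightarrow> real) \<Rightarrow> 'v \<Rightarrow> real" where
  "levels E \<alpha> r = (\<lambda>v. Max {balancedR \<alpha> r u v | u. (u, v) \<in> E})"

end

theory Submission imports Defs begin

lemma sc_basic:
  assumes "strongly_connected V E" "v \<in> V"
  shows "finite {w. (v,w)\<in>E}" "{w. (v,w)\<in>E} \<noteq> {}" "finite {u. (u,v)\<in>E}" "{u. (u,v)\<in>E} \<noteq> {}"
proof -
  have fV: "finite V" and EV: "E \<subseteq> V \<times> V" and tr: "(v,v) \<in> E\<^sup>+"
    using assms by (auto simp: strongly_connected_def)
  show "finite {w. (v,w)\<in>E}" by (rule finite_subset[OF _ fV]) (use EV in auto)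
  show "finite {u. (u,v)\<in>E}" by (rule finite_subset[OF _ fV]) (use EV in auto)
  from tr obtain w where "(v,w) \<in> E" by (meson converse_tranclE)
  then show "{w. (v,w)\<in>E} \<noteq> {}" by auto
  from tr obtain u where "(u,v) \<in> E" by (meson tranclE)
  then show "{u. (u,v)\<in>E} \<noteq> {}" by auto
qed

lemma in_set_eq: "{\<beta> u v | u. (u, v) \<in> E} = (\<lambda>u. \<beta> u v) ` {u. (u,v)\<in>E}" by auto
lemma out_set_eq: "{\<beta> v w | w. (v, w) \<in> E} = (\<lambda>w. \<beta> v w) ` {w. (v,w)\<in>E}" by auto

lemma in_ge:
  assumes "strongly_connected V E" "(u,v) \<in> E"
  shows "\<beta> u v \<le> alpha_in E \<beta> v"
proof -
  have "v \<in> V" using assms by (auto simp: strongly_connected_def)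
  then show ?thesis using sc_basic[OF assms(1)] assms(2)
    unfolding alpha_in_def in_set_eq by (intro Max_ge) auto
qed

lemma out_ge:
  assumes "strongly_connected V E" "(v,w) \<in> E"
  shows "\<beta> v w \<le> alpha_out E \<beta> v"
proof -
  have "v \<in> V" using assms by (auto simp: strongly_connected_def)
  then show ?thesis using sc_basic[OF assms(1)] assms(2)
    unfolding alpha_out_def out_set_eq by (intro Max_ge) auto
qed

lemma in_obtain:
  assumes "strongly_connected V E" "v \<in> V"
  shows "\<exists>u. (u,v)\<in>E \<and> alpha_in E \<beta> v = \<beta> u v"
proof -
  have "alpha_in E \<beta> v \<in> (\<lambda>u. \<beta> u v) ` {u. (u,v)\<in>E}"
    unfolding alpha_in_def in_set_eq using sc_basic[OF assms] by (intro Max_in) auto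
  then show ?thesis by auto
qed

lemma out_obtain:
  assumes "strongly_connected V E" "v \<in> V"
  shows "\<exists>w. (v,w)\<in>E \<and> alpha_out E \<beta> v = \<beta> v w"
proof -
  have "alpha_out E \<beta> v \<in> (\<lambda>w. \<beta> v w) ` {w. (v,w)\<in>E}"
    unfolding alpha_out_def out_set_eq using sc_basic[OF assms] by (intro Max_in) auto
  then show ?thesis by auto
qed

lemma raise_op_bal:
  "raise_op E (balancedR \<alpha> R) v = balancedR \<alpha> (R(v := R v + rhoR E (balancedR \<alpha> R) v / 2))"
  by (auto simp: raise_op_def balancedR_def fun_eq_iff)

lemma iter_Suc: "raise_iter E \<alpha> \<sigma> (Suc n) = (raise_op E (fst (raise_iter E \<alpha> \<sigma> n)) (\<sigma> n),
   (snd (raise_iter E \<alpha> \<sigma> n))(\<sigma> n := snd (raise_iter E \<alpha> \<sigma> n) (\<sigma> n) + rhoR E (fst (raise_iter E \<alpha> \<sigma> n)) (\<sigma> n) / 2))"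
  by (cases "raise_iter E \<alpha> \<sigma> n") (simp add: Let_def)

lemma iter_fst: "fst (raise_iter E \<alpha> \<sigma> n) = balancedR \<alpha> (snd (raise_iter E \<alpha> \<sigma> n))"
proof (induction n)
  case 0 then show ?case by (simp add: balancedR_def)
next
  case (Suc n) then show ?case
    by (simp only: iter_Suc fst_conv snd_conv raise_op_bal)
qed

lemma iter_snd_Suc:
  "snd (raise_iter E \<alpha> \<sigma> (Suc n)) = (snd (raise_iter E \<alpha> \<sigma> n))(\<sigma> n :=
     snd (raise_iter E \<alpha> \<sigma> n) (\<sigma> n) + rhoR E (balancedR \<alpha> (snd (raise_iter E \<alpha> \<sigma> n))) (\<sigma> n) / 2)"
  using iter_fst[of E \<alpha> \<sigma> n] by (simp only: iter_Suc snd_conv)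

lemma iter_nonneg: "snd (raise_iter E \<alpha> \<sigma> n) w \<ge> 0"
proof (induction n arbitrary: w)
  case 0 then show ?case by simp
next
  case (Suc n)
  have h: "rhoR E \<beta> v \<ge> 0" for \<beta> v by (simp add: rhoR_def)
  show ?case using Suc[of w] Suc[of "\<sigma> n"] h
    by (auto simp del: raise_iter.simps simp: iter_snd_Suc intro!: add_nonneg_nonneg)
qed

lemma iter_le:
  assumes sc: "strongly_connected V E" and sV: "\<forall>n. \<sigma> n \<in> V"
    and p0: "\<forall>w\<in>V. p w \<ge> 0"
    and bal: "\<forall>w\<in>V. alpha_out E (balancedR \<alpha> p) w \<le> alpha_in E (balancedR \<alpha> p) w"
  shows "\<forall>w\<in>V. snd (raise_iter E \<alpha> \<sigma> n) w \<le> p w"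
proof (induction n)
  case 0 then show ?case using p0 by simp
next
  case (Suc n)
  define R where "R = snd (raise_iter E \<alpha> \<sigma> n)"
  define v where "v = \<sigma> n"
  have vV: "v \<in> V" using sV v_def by auto
  define q where "q = p v - R v"
  have q0: "q \<ge> 0" using Suc vV by (simp add: R_def q_def)
  define \<beta> where "\<beta> = balancedR \<alpha> R"
  define \<gamma> where "\<gamma> = balancedR \<alpha> p"
  have EV: "E \<subseteq> V \<times> V" using sc by (simp add: strongly_connected_def)
  have "alpha_in E \<gamma> v - q \<le> alpha_in E \<beta> v"
  proof -
    obtain a where a: "(a,v)\<in>E" "alpha_in E \<gamma> v = \<gamma> a v" using in_obtain[OF sc vV] by blast
    have aV: "a \<in> V" using a EV by auto
    have "\<gamma> a v - q \<le> \<beta> a v" using Suc aV unfolding \<gamma>_def \<beta>_def balancedR_def q_def R_def by auto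
    also have "\<dots> \<le> alpha_in E \<beta> v" by (rule in_ge[OF sc a(1)])
    finally show ?thesis using a by simp
  qed
  moreover have "alpha_out E \<beta> v \<le> alpha_out E \<gamma> v + q"
  proof -
    obtain b where b: "(v,b)\<in>E" "alpha_out E \<beta> v = \<beta> v b" using out_obtain[OF sc vV] by blast
    have bV: "b \<in> V" using b EV by auto
    have "\<beta> v b \<le> \<gamma> v b + q" using Suc bV unfolding \<gamma>_def \<beta>_def balancedR_def q_def R_def by auto
    also have "\<dots> \<le> alpha_out E \<gamma> v + q" using out_ge[OF sc b(1)] by simp
    finally show ?thesis using b by simp
  qed
  moreover have "alpha_out E \<gamma> v \<le> alpha_in E \<gamma> v" using bal vV \<gamma>_def by auto
  ultimately have "rhoR E \<beta> v \<le> 2 * q" using q0 by (simp add: rhoR_def)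
  then have "R v + rhoR E \<beta> v / 2 \<le> p v" by (simp add: q_def)
  then show ?case using Suc
    by (auto simp del: raise_iter.simps simp: iter_snd_Suc R_def[symmetric] v_def[symmetric] \<beta>_def[symmetric])
qed


lemma fair_exists:
  assumes "finite V" "V \<noteq> {}"
  shows "\<exists>\<sigma>. fair_seq V \<sigma>"
proof -
  obtain xs where xs: "set xs = V" using finite_list[OF assms(1)] by blast
  have L: "length xs > 0" using xs assms(2) by auto
  define \<sigma> where "\<sigma> n = xs ! (n mod length xs)" for n
  have "fair_seq V \<sigma>" unfolding fair_seq_def
  proof (intro conjI allI ballI)
    fix n show "\<sigma> n \<in> V" using L xs by (auto simp: \<sigma>_def)
  next
    fix v n assume "v \<in> V"
    then obtain i where i: "i < length xs" "xs ! i = v" using xs by (metis in_set_conv_nth)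
    have "n * length xs + i \<ge> n" proof -
      have "n \<le> n * length xs" using L by (metis One_nat_def Suc_leI mult_le_mono2 nat_mult_1_right mult.commute)
      then show ?thesis by linarith
    qed
    moreover have "\<sigma> (n * length xs + i) = v" using i by (simp add: \<sigma>_def)
    ultimately show "\<exists>m\<ge>n. \<sigma> m = v" by blast
  qed
  then show ?thesis by blast
qed

lemma tendsto_Max_finite:
  fixes F :: "nat \<Rightarrow> 'i \<Rightarrow> real"
  assumes "finite I" "I \<noteq> {}" "\<forall>i\<in>I. (\<lambda>n. F n i) \<longlonglongrightarrow> G i"
  shows "(\<lambda>n. Max ((\<lambda>i. F n i) ` I)) \<longlonglongrightarrow> Max (G ` I)"
  using assms
proof (induction I rule: finite_ne_induct)
  case (singleton x) then show ?case by simp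
next
  case (insert x F')
  then show ?case by (simp add: tendsto_max)
qed

lemma limit_facts:
  assumes sc: "strongly_connected V E" and lim: "is_raise_limit V E \<alpha> r"
  shows "\<forall>w\<in>V. r w \<ge> 0"
    and "\<forall>w\<in>V. alpha_out E (balancedR \<alpha> r) w \<le> alpha_in E (balancedR \<alpha> r) w"
    and "\<And>p. \<forall>w\<in>V. p w \<ge> 0 \<Longrightarrow>
          \<forall>w\<in>V. alpha_out E (balancedR \<alpha> p) w \<le> alpha_in E (balancedR \<alpha> p) w \<Longrightarrow>
          \<forall>w\<in>V. r w \<le> p w"
proof -
  have fV: "finite V" "V \<noteq> {}" and EV: "E \<subseteq> V \<times> V" using sc by (auto simp: strongly_connected_def)
  obtain \<sigma> where fs: "fair_seq V \<sigma>" using fair_exists[OF fV] by blast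
  define R where "R n = snd (raise_iter E \<alpha> \<sigma> n)" for n
  have conv: "(\<lambda>n. R n u) \<longlonglongrightarrow> r u" if "u \<in> V" for u
    using lim fs that by (auto simp: is_raise_limit_def R_def)
  have sV: "\<forall>n. \<sigma> n \<in> V" using fs by (simp add: fair_seq_def)
  show "\<forall>w\<in>V. r w \<ge> 0"
  proof
    fix w assume "w \<in> V"
    show "r w \<ge> 0" by (rule LIMSEQ_le_const[OF conv[OF \<open>w\<in>V\<close>]]) (auto simp: R_def iter_nonneg)
  qed
  show "\<forall>w\<in>V. r w \<le> p w" if "\<forall>w\<in>V. p w \<ge> 0"
     "\<forall>w\<in>V. alpha_out E (balancedR \<alpha> p) w \<le> alpha_in E (balancedR \<alpha> p) w" for p
  proof
    fix w assume "w \<in> V"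
    show "r w \<le> p w" by (rule LIMSEQ_le_const2[OF conv[OF \<open>w\<in>V\<close>]])
      (use iter_le[OF sc sV that] \<open>w\<in>V\<close> in \<open>auto simp: R_def\<close>)
  qed
  show "\<forall>w\<in>V. alpha_out E (balancedR \<alpha> r) w \<le> alpha_in E (balancedR \<alpha> r) w"
  proof
    fix w assume wV: "w \<in> V"
    have bconv: "(\<lambda>n. balancedR \<alpha> (R n) a b) \<longlonglongrightarrow> balancedR \<alpha> r a b" if "a \<in> V" "b \<in> V" for a b
      unfolding balancedR_def by (intro tendsto_intros conv that)
    have oc: "(\<lambda>n. alpha_out E (balancedR \<alpha> (R n)) w) \<longlonglongrightarrow> alpha_out E (balancedR \<alpha> r) w"
      unfolding alpha_out_def out_set_eq
      by (rule tendsto_Max_finite) (use sc_basic[OF sc wV] EV wV bconv in auto)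
    have ic: "(\<lambda>n. alpha_in E (balancedR \<alpha> (R n)) w) \<longlonglongrightarrow> alpha_in E (balancedR \<alpha> r) w"
      unfolding alpha_in_def in_set_eq
      by (rule tendsto_Max_finite) (use sc_basic[OF sc wV] EV wV bconv in auto)
    have rc: "(\<lambda>n. rhoR E (balancedR \<alpha> (R n)) w) \<longlonglongrightarrow> rhoR E (balancedR \<alpha> r) w"
      unfolding rhoR_def by (intro tendsto_intros oc ic)
    have dc: "(\<lambda>n. R (Suc n) w - R n w) \<longlonglongrightarrow> 0"
      using tendsto_diff[OF LIMSEQ_Suc[OF conv[OF wV]] conv[OF wV]] by simp
    show "alpha_out E (balancedR \<alpha> r) w \<le> alpha_in E (balancedR \<alpha> r) w"
    proof (rule ccontr)
      assume "\<not> ?thesis"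
      then have d: "rhoR E (balancedR \<alpha> r) w > 0" by (simp add: rhoR_def)
      define d where "d = rhoR E (balancedR \<alpha> r) w"
      have "\<forall>\<^sub>F n in sequentially. rhoR E (balancedR \<alpha> (R n)) w > d / 2"
        using order_tendstoD(1)[OF rc, of "d/2"] d d_def by simp
      moreover have "\<forall>\<^sub>F n in sequentially. R (Suc n) w - R n w < d / 4"
        using order_tendstoD(2)[OF dc, of "d/4"] d d_def by simp
      ultimately have "\<forall>\<^sub>F n in sequentially. rhoR E (balancedR \<alpha> (R n)) w > d / 2 \<and> R (Suc n) w - R n w < d / 4"
        by (rule eventually_conj)
      then obtain N where N: "\<And>n. n \<ge> N \<Longrightarrow> rhoR E (balancedR \<alpha> (R n)) w > d / 2 \<and> R (Suc n) w - R n w < d / 4"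
        by (auto simp: eventually_sequentially)
      obtain m where m: "m \<ge> N" "\<sigma> m = w" using fs wV unfolding fair_seq_def by blast
      have "R (Suc m) w = R m w + rhoR E (balancedR \<alpha> (R m)) w / 2"
        using m by (simp del: raise_iter.simps add: R_def iter_snd_Suc)
      then show False using N[OF m(1)] by simp
    qed
  qed
qed


theorem lemma7:
  fixes V :: "'v set" and E :: "('v \<times> 'v) set" and \<alpha> :: "'v \<Rightarrow> 'v \<Rightarrow> real"
    and r :: "'v \<Rightarrow> real" and v :: 'v
  assumes "strongly_connected V E"
    and "is_raise_limit V E \<alpha> r"
    and "v \<in> V"
    and "heights r v > Min (heights r ` V)"
  shows "\<exists>u'\<in>{u \<in> V. heights r u < heights r v \<and>
                 levels E \<alpha> r u = Max {levels E \<alpha> r w | w. w \<in> V \<and> heights r w < heights r v}}.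
         \<exists>v'. (u', v') \<in> E
           \<and> v' \<notin> {u \<in> V. heights r u < heights r v \<and>
                 levels E \<alpha> r u = Max {levels E \<alpha> r w | w. w \<in> V \<and> heights r w < heights r v}}
           \<and> balancedR \<alpha> r u' v' \<ge> Max {levels E \<alpha> r w | w. w \<in> V \<and> heights r w < heights r v}
           \<and> heights r v' \<ge> heights r v"
proof (rule ccontr)
  assume NG: "\<not> ?thesis"
  note sc = assms(1) and lim = assms(2) and vV = assms(3)
  have fV: "finite V" "V \<noteq> {}" and EV: "E \<subseteq> V \<times> V" using sc by (auto simp: strongly_connected_def)
  have fE: "finite E" using EV fV by (meson finite_SigmaI finite_subset)
  note LF = limit_facts[OF sc lim]
  define \<gamma> where "\<gamma> = balancedR \<alpha> r"
  define x where "x = levels E \<alpha> r"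
  have x_eq: "x w = alpha_in E \<gamma> w" for w by (simp add: x_def \<gamma>_def levels_def alpha_in_def)
  have h_iff: "heights r a < heights r b \<longleftrightarrow> r a > r b" for a b by (simp add: heights_def)
  define S where "S = {w \<in> V. r w > r v}"
  have lset: "{levels E \<alpha> r w | w. w \<in> V \<and> heights r w < heights r v} = x ` S"
    by (auto simp: S_def x_def h_iff)
  define c where "c = Max (x ` S)"
  define U where "U = {u \<in> V. r u > r v \<and> x u = c}"
  have fS: "finite S" using fV by (simp add: S_def)
  have SU: "S \<noteq> {}"
  proof -
    have "Min (heights r ` V) \<in> heights r ` V" using fV by (intro Min_in) auto
    then obtain u where "u \<in> V" "heights r u < heights r v" using assms(4) by auto
    then show ?thesis by (auto simp: S_def h_iff)
  qed
  have c_ge: "x w \<le> c" if "w \<in> S" for w using fS that by (simp add: c_def)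
  have "c \<in> x ` S" unfolding c_def using fS SU by (intro Max_in) auto
  then have Une: "U \<noteq> {}" by (auto simp: U_def S_def)
  have US: "U \<subseteq> S" by (auto simp: U_def S_def)
  have NH: "\<forall>u'\<in>U. \<forall>v'. (u',v') \<in> E \<longrightarrow> v' \<notin> U \<longrightarrow> c \<le> \<gamma> u' v' \<longrightarrow> r v' > r v"
  proof -
    have NG': "\<not> (\<exists>u'\<in>{u \<in> V. heights r u < heights r v \<and> x u = c}. \<exists>v'. (u',v')\<in>E \<and>
        v' \<notin> {u \<in> V. heights r u < heights r v \<and> x u = c} \<and> \<gamma> u' v' \<ge> c \<and> heights r v' \<ge> heights r v)"
    proof -
      have c_eq: "Max {x w |w. w \<in> V \<and> heights r w < heights r v} = c"
        using lset unfolding c_def x_def by simp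
      show ?thesis using NG unfolding x_def[symmetric] \<gamma>_def[symmetric] c_eq .
    qed
    have Ueq: "{u \<in> V. heights r u < heights r v \<and> x u = c} = U" by (auto simp: U_def h_iff)
    show ?thesis using NG' unfolding Ueq by (auto simp: heights_def) (meson not_le)
  qed
  have F1: "b \<in> U" if "u \<in> U" "(u,b) \<in> E" "\<gamma> u b \<ge> c" for u b
  proof (rule ccontr)
    assume "b \<notin> U"
    then have "r b > r v" using NH that by blast
    moreover have bV: "b \<in> V" using that EV by auto
    ultimately have "b \<in> S" by (simp add: S_def)
    then have "x b \<le> c" by (rule c_ge)
    moreover have "\<gamma> u b \<le> x b" using in_ge[OF sc that(2)] x_eq by simp
    ultimately have "x b = c" using that by linarith
    then show False using \<open>b \<notin> U\<close> \<open>b\<in>V\<close> \<open>r b > r v\<close> by (simp add: U_def)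
  qed
  have F2: "\<gamma> u b \<le> c" if "u \<in> U" "(u,b) \<in> E" for u b
  proof -
    have uV: "u \<in> V" using that by (simp add: U_def)
    have "\<gamma> u b \<le> alpha_out E \<gamma> u" by (rule out_ge[OF sc that(2)])
    also have "\<dots> \<le> alpha_in E \<gamma> u" using LF(2) uV \<gamma>_def by auto
    also have "\<dots> = c" using that x_eq by (simp add: U_def)
    finally show ?thesis .
  qed
  define H where "H = {(a,b). a \<in> U \<and> (a,b) \<in> E \<and> \<gamma> a b \<ge> c}"
  define Reach where "Reach a = {b. (a,b) \<in> H\<^sup>*}" for a
  have RU: "Reach a \<subseteq> U" if "a \<in> U" for a
  proof
    fix b assume "b \<in> Reach a"
    then have "(a,b) \<in> H\<^sup>*" by (simp add: Reach_def)
    then show "b \<in> U"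
      by (induction rule: rtrancl_induct) (use that F1 in \<open>auto simp: H_def\<close>)
  qed
  have fU: "finite U" using fV by (simp add: U_def)
  define m where "m = Min ((\<lambda>a. card (Reach a)) ` U)"
  have "m \<in> (\<lambda>a. card (Reach a)) ` U" unfolding m_def using fU Une by (intro Min_in) auto
  then obtain a0 where a0: "a0 \<in> U" "card (Reach a0) = m" by auto
  have a0min: "card (Reach a0) \<le> card (Reach a)" if "a \<in> U" for a
    using a0 fU that by (simp add: m_def)
  define A where "A = Reach a0"
  have AU: "A \<subseteq> U" using RU a0 by (simp add: A_def)
  have a0A: "a0 \<in> A" by (simp add: A_def Reach_def)
  have fA: "finite A" using AU fU finite_subset by blast
  have clos: "b \<in> A" if "a \<in> A" "(a,b) \<in> E" "\<gamma> a b \<ge> c" for a b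
  proof -
    have "(a,b) \<in> H" using that AU by (auto simp: H_def)
    then show ?thesis using that(1) by (auto simp: A_def Reach_def)
  qed
  have bk: "\<exists>a'\<in>A. (a',a) \<in> E \<and> \<gamma> a' a \<ge> c" if "a \<in> A" "(a,b) \<in> E" "\<gamma> a b \<ge> c" for a b
  proof -
    have bA: "b \<in> A" by (rule clos[OF that])
    have bU: "b \<in> U" using bA AU by auto
    have sub: "Reach b \<subseteq> A" using bA by (auto simp: A_def Reach_def)
    have "card (Reach b) \<ge> card A" using a0min[OF bU] by (simp add: A_def)
    moreover have "card (Reach b) \<le> card A" using card_mono[OF fA sub] .
    ultimately have eq: "Reach b = A" using card_subset_eq[OF fA sub] by simp
    then have "(b,a) \<in> H\<^sup>*" using that(1) unfolding Reach_def by blast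
    then show ?thesis
    proof (cases "b = a")
      case True then show ?thesis using that by auto
    next
      case False
      then have "(b,a) \<in> H\<^sup>+" using \<open>(b,a) \<in> H\<^sup>*\<close> by (simp add: rtrancl_eq_or_trancl)
      then obtain a' where "(b,a') \<in> H\<^sup>*" "(a',a) \<in> H" by (meson tranclD2)
      then have "a' \<in> Reach b" by (simp add: Reach_def)
      then show ?thesis using \<open>(a',a) \<in> H\<close> eq by (auto simp: H_def)
    qed
  qed
  define D where "D = insert 1 ((\<lambda>(a,b). (c - \<gamma> a b)/2) ` {(a,b) \<in> E. a \<in> A \<and> \<gamma> a b < c} \<union> r ` A)"
  define \<epsilon> where "\<epsilon> = Min D"
  have fD: "finite D"
  proof -
    have "{(a,b) \<in> E. a \<in> A \<and> \<gamma> a b < c} \<subseteq> E" by auto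
    then have "finite {(a,b) \<in> E. a \<in> A \<and> \<gamma> a b < c}" using fE finite_subset by blast
    then show ?thesis using fA by (simp add: D_def)
  qed
  have rpos: "r a > 0" if "a \<in> A" for a
  proof -
    have "a \<in> U" using that AU by auto
    then have "r a > r v" by (simp add: U_def)
    moreover have "r v \<ge> 0" using LF(1) vV by auto
    ultimately show ?thesis by linarith
  qed
  have "\<forall>d\<in>D. d > 0" using rpos by (auto simp: D_def)
  then have epos: "\<epsilon> > 0" unfolding \<epsilon>_def using fD by (subst Min_gr_iff) (auto simp: D_def)
  have eps1: "2 * \<epsilon> \<le> c - \<gamma> a b" if "(a,b) \<in> E" "a \<in> A" "\<gamma> a b < c" for a b
  proof -
    have "(c - \<gamma> a b)/2 \<in> D" using that by (auto simp: D_def image_iff)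
    then show ?thesis unfolding \<epsilon>_def using fD Min_le by fastforce
  qed
  have eps2: "\<epsilon> \<le> r a" if "a \<in> A" for a
  proof -
    have "r a \<in> D" using that by (auto simp: D_def)
    then show ?thesis unfolding \<epsilon>_def using fD Min_le by fastforce
  qed
  define p where "p w = (if w \<in> A then r w - \<epsilon> else r w)" for w
  define \<gamma>' where "\<gamma>' = balancedR \<alpha> p"
  have g': "\<gamma>' a b = \<gamma> a b + (if a \<in> A then \<epsilon> else 0) - (if b \<in> A then \<epsilon> else 0)" for a b
    by (simp add: \<gamma>'_def \<gamma>_def balancedR_def p_def)
  have p0: "\<forall>w\<in>V. p w \<ge> 0"
  proof
    fix w assume "w \<in> V"
    show "p w \<ge> 0" using eps2 LF(1) \<open>w\<in>V\<close> by (simp add: p_def)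
  qed
  have bal: "\<forall>w\<in>V. alpha_out E \<gamma>' w \<le> alpha_in E \<gamma>' w"
  proof
    fix w assume wV: "w \<in> V"
    obtain b where b: "(w,b) \<in> E" "alpha_out E \<gamma>' w = \<gamma>' w b" using out_obtain[OF sc wV] by blast
    obtain a where a: "(a,w) \<in> E" "alpha_in E \<gamma> w = \<gamma> a w" using in_obtain[OF sc wV] by blast
    have ia: "\<gamma>' a w \<le> alpha_in E \<gamma>' w" by (rule in_ge[OF sc a(1)])
    have ob: "\<gamma> w b \<le> alpha_out E \<gamma> w" by (rule out_ge[OF sc b(1)])
    have wb: "alpha_out E \<gamma> w \<le> alpha_in E \<gamma> w" using LF(2) wV \<gamma>_def by auto
    show "alpha_out E \<gamma>' w \<le> alpha_in E \<gamma>' w"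
    proof (cases "w \<in> A")
      case False
      have "\<gamma>' w b \<le> \<gamma> w b" using False g'[of w b] epos by auto
      moreover have "\<gamma> a w \<le> \<gamma>' a w" using False g'[of a w] epos by auto
      ultimately show ?thesis using b a ia ob wb by linarith
    next
      case True
      have wU: "w \<in> U" using True AU by auto
      have inc: "alpha_in E \<gamma> w = c" using wU x_eq by (simp add: U_def)
      have ob2: "\<gamma>' w b \<le> \<gamma> w b + \<epsilon>" using True g'[of w b] epos by auto
      show ?thesis
      proof (cases "\<exists>a'\<in>A. (a',w) \<in> E \<and> \<gamma> a' w \<ge> c")
        case True
        then obtain a' where a': "a' \<in> A" "(a',w) \<in> E" "\<gamma> a' w \<ge> c" by blast
        have "\<gamma>' a' w = \<gamma> a' w" using a'(1) \<open>w\<in>A\<close> g'[of a' w] by simp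
        then have "c \<le> alpha_in E \<gamma>' w" using in_ge[OF sc a'(2), of \<gamma>'] a'(3) by linarith
        moreover have "\<gamma>' w b \<le> c"
        proof (cases "b \<in> A")
          case True
          then show ?thesis using g'[of w b] \<open>w\<in>A\<close> F2[OF wU b(1)] by simp
        next
          case False
          then have "\<gamma> w b < c" using clos[OF \<open>w\<in>A\<close> b(1)] by force
          then show ?thesis using eps1[OF b(1) \<open>w\<in>A\<close>] ob2 epos by linarith
        qed
        ultimately show ?thesis using b by linarith
      next
        case False
        then have "\<gamma> w b < c" using bk[OF \<open>w\<in>A\<close> b(1)] by force
        then have "\<gamma>' w b \<le> c - \<epsilon>" using eps1[OF b(1) \<open>w\<in>A\<close>] ob2 by linarith
        moreover have "\<gamma> a w - \<epsilon> \<le> \<gamma>' a w" using g'[of a w] epos by auto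
        ultimately show ?thesis using b a ia inc by linarith
      qed
    qed
  qed
  have "\<forall>w\<in>V. r w \<le> p w" using LF(3)[OF p0] bal \<gamma>'_def by auto
  moreover have "a0 \<in> V" using a0 by (simp add: U_def)
  ultimately have "r a0 \<le> r a0 - \<epsilon>" using a0A by (force simp: p_def)
  then show False using epos by simp
qed

end
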